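(* Let $\alpha$ be a composition and $n\ge1$. If $\alpha<_c\beta$ and $\beta/\!\!/\alpha$ is an nc border strip with $n$ boxes, then there exists $w\in CRHW_n$ with $w(\alpha)=\beta$.
   Context: A composition is a finite sequence $\alpha=(\alpha_1,\dots,\alpha_k)$ of positive integers; $\ell(\alpha)=k$. Its diagram is the set of boxes $(i,j)$, $1\le i\le\ell(\alpha)$, $1\le j\le\alpha_i$, rows numbered top to bottom, columns left to right. For compositions $\gamma=(\gamma_1,\dots,\gamma_l)$, $\delta$ write $\gamma\lessdot_c\delta$ if $\delta=(1,\gamma_1,\dots,\gamma_l)$ or $\delta=(\gamma_1,\dots,\gamma_k+1,\dots,\gamma_l)$ for some $k$ with $\gamma_i\neq\gamma_k$ for all $i<k$; $<_c$ is the transitive closure. For $\gamma<_c\delta$, $\delta/\!\!/\gamma$ is the set of boxes of $\delta$ not in the inner shape, the inner shape being the boxes $(\ell(\delta)-\ell(\gamma)+i,j)$, $1\le i\le\ell(\gamma)$, $1\le j\le\gamma_i$. $\mathrm{supp}(\beta/\!\!/\alpha)$ is the set of columns containing a box of $\beta/\!\!/\alpha$; $\beta/\!\!/\alpha$ is an interval shape if this set is a set of consecutive integers. An interval shape is an nc border strip if (1) whenever $(i,1),(i,2)\in\beta/\!\!/\alpha$, the box $(i,1)$ is the bottommost box of column 1 of $\beta/\!\!/\alpha$, and (2) whenever $(i,j),(i,j+1)\in\beta/\!\!/\alpha$ with $j\ge2$, the box $(i,j)$ is the topmost box of column $j$ of $\beta/\!\!/\alpha$. Box-adding operators: $\mathfrak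 t_1(\alpha)=(1,\alpha_1,\dots,\alpha_k)$; for $i\ge2$, $\mathfrak t_i(\alpha)$ increases the leftmost part of $\alpha$ equal to $i-1$ by $1$, and is $0$ if there is no such part; $\mathfrak t_i(0)=0$. A word $w=\mathfrak t_{i_1}\cdots\mathfrak t_{i_n}$ acts by $w(\alpha)=\mathfrak t_{i_1}(\cdots\mathfrak t_{i_n}(\alpha))$. It is a reverse hookword if $i_1\le\cdots\le i_{k+1}>i_{k+2}>\cdots>i_n$ for some $0\le k\le n-1$, connected if $\{i_1,\dots,i_n\}$ is a set of consecutive integers; $CRHW_n$ is the set of connected reverse hookwords of length $n$. *)

theory Defs
  imports Main
begin

(* Compositions are lists of positive naturals; boxes are pairs (row, column), 1-indexed. *)
type_synonym comp = "nat list"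

definition is_comp :: "comp \<Rightarrow> bool" where
  "is_comp \<alpha> \<longleftrightarrow> (\<forall>x\<in>set \<alpha>. 0 < x)"

definition ccover :: "comp \<Rightarrow> comp \<Rightarrow> bool" where
  "ccover \<gamma> \<delta> \<longleftrightarrow> \<delta> = 1 # \<gamma> \<or>
     (\<exists>k < length \<gamma>. \<delta> = \<gamma>[k := \<gamma> ! k + 1] \<and> (\<forall>i < k. \<gamma> ! i \<noteq> \<gamma> ! k))"

definition clt :: "comp \<Rightarrow> comp \<Rightarrow> bool" where
  "clt = tranclp ccover"

definition diagram :: "comp \<Rightarrow> (nat \<times> nat) set" where
  "diagram \<delta> = {(i, j). 1 \<le> i \<and> i \<le> length \<delta> \<and> 1 \<le> j \<and> j \<le> \<delta> ! (i - 1)}"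

(* inner shape of gamma inside delta (bottom-justified) *)
definition inner_shape :: "comp \<Rightarrow> comp \<Rightarrow> (nat \<times> nat) set" where
  "inner_shape \<gamma> \<delta> = {(length \<delta> - length \<gamma> + i, j) | i j.
      1 \<le> i \<and> i \<le> length \<gamma> \<and> 1 \<le> j \<and> j \<le> \<gamma> ! (i - 1)}"

definition skew :: "comp \<Rightarrow> comp \<Rightarrow> (nat \<times> nat) set" where
  "skew \<delta> \<gamma> = diagram \<delta> - inner_shape \<gamma> \<delta>"

definition supp :: "(nat \<times> nat) set \<Rightarrow> nat set" where
  "supp S = snd ` S"

definition interval_shape :: "(nat \<times> nat) set \<Rightarrow> bool" where
  "interval_shape S \<longleftrightarrow>
     (\<forall>x y z. x \<in> supp S \<and> z \<in> supp S \<and> x \<le> y \<and> y \<le> z \<longrightarrow> y \<in> supp S)"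

(* rows numbered top to bottom: bottommost = largest row index, topmost = smallest *)
definition nc_border_strip :: "(nat \<times> nat) set \<Rightarrow> bool" where
  "nc_border_strip S \<longleftrightarrow> interval_shape S \<and>
     (\<forall>i. (i, 1) \<in> S \<and> (i, 2) \<in> S \<longrightarrow> i = Max {r. (r, 1) \<in> S}) \<and>
     (\<forall>i j. 2 \<le> j \<and> (i, j) \<in> S \<and> (i, j + 1) \<in> S \<longrightarrow> i = Min {r. (r, j) \<in> S})"

(* box-adding operators; None plays the role of 0 *)
definition box_add :: "nat \<Rightarrow> comp \<Rightarrow> comp option" where
  "box_add i \<alpha> = (if i = 1 then Some (1 # \<alpha>)
     else if 2 \<le> i \<and> (i - 1) \<in> set \<alpha> then
       (let k = (LEAST k. k < length \<alpha> \<and> \<alpha> ! k = i - 1) in Some (\<alpha>[k := \<alpha> ! k + 1]))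
     else None)"

(* w = t_{i_1} ... t_{i_n} acts by w(alpha) = t_{i_1}(... t_{i_n}(alpha)) *)
definition word_act :: "nat list \<Rightarrow> comp \<Rightarrow> comp option" where
  "word_act w \<alpha> = foldr (\<lambda>i x. Option.bind x (box_add i)) w (Some \<alpha>)"

definition reverse_hookword :: "nat list \<Rightarrow> bool" where
  "reverse_hookword w \<longleftrightarrow> (\<exists>k < length w.
      (\<forall>j. j < k \<longrightarrow> w ! j \<le> w ! (j + 1)) \<and>
      (\<forall>j. k \<le> j \<and> j + 1 < length w \<longrightarrow> w ! j > w ! (j + 1)))"

definition connected_word :: "nat list \<Rightarrow> bool" where
  "connected_word w \<longleftrightarrow> (\<exists>a b. set w = {a..b})"

definition CRHW :: "nat \<Rightarrow> nat list set" where
  "CRHW n = {w. length w = n \<and> (\<forall>i\<in>set w. 1 \<le> i) \<and> reverse_hookword w \<and> connected_word w}"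

end

theory Submission
  imports Defs
begin


fun app :: "nat list \<Rightarrow> comp \<Rightarrow> comp option" where
  "app [] g = Some g"
| "app (x#xs) g = Option.bind (box_add x g) (app xs)"

lemma app_Nil'[simp]: "app [] = Some" by (rule ext) simp

lemma bind_Some_r[simp]: "Option.bind m Some = m" by (cases m) auto

lemma app_append: "app (xs @ ys) g = Option.bind (app xs g) (app ys)"
proof (induction xs arbitrary: g)
  case (Cons a xs) then show ?case by (cases "box_add a g") auto
qed simp

lemma word_act_app: "word_act w \<alpha> = app (rev w) \<alpha>"
proof (induction w arbitrary: \<alpha>)
  case Nil then show ?case by (simp add: word_act_def)
next
  case (Cons x w)
  have "word_act (x # w) \<alpha> = Option.bind (word_act w \<alpha>) (box_add x)"
    by (simp add: word_act_def)
  also have "\<dots> = app (rev (x#w)) \<alpha>"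
    using Cons by (cases "app (rev w) \<alpha>") (auto simp: app_append)
  finally show ?case .
qed

lemma app_ones: "app (replicate k 1) g = Some (replicate k 1 @ g)"
  by (induction k arbitrary: g) (auto simp: box_add_def replicate_app_Cons_same)

lemma box_add_sum: "box_add x g = Some h \<Longrightarrow> sum_list h = sum_list g + 1"
proof -
  assume h: "box_add x g = Some h"
  show ?thesis
  proof (cases "x = 1")
    case True then show ?thesis using h by (auto simp: box_add_def)
  next
    case False
    then have x: "2 \<le> x" "x - 1 \<in> set g" using h by (auto simp: box_add_def split: if_splits)
    define k where "k = (LEAST k. k < length g \<and> g ! k = x - 1)"
    have ex: "\<exists>k. k < length g \<and> g ! k = x - 1" using x by (auto simp: in_set_conv_nth)
    have k: "k < length g" using LeastI_ex[OF ex] unfolding k_def by blast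
    have "h = g[k := g!k + 1]" using h x False by (auto simp: box_add_def k_def Let_def)
    then show ?thesis using k by (simp add: sum_list_update)
  qed
qed

lemma app_sum: "app xs g = Some g' \<Longrightarrow> sum_list g' = sum_list g + length xs"
proof (induction xs arbitrary: g)
  case Nil then show ?case by simp
next
  case (Cons x xs)
  then obtain h where h: "box_add x g = Some h" "app xs h = Some g'"
    by (cases "box_add x g") auto
  show ?case using Cons.IH[OF h(2)] box_add_sum[OF h(1)] by simp
qed

definition batch_ok :: "nat \<Rightarrow> nat list \<Rightarrow> nat list \<Rightarrow> bool" where
  "batch_ok j g g' \<longleftrightarrow> length g' = length g \<and>
     (\<forall>r<length g. g'!r = g!r \<or> (g!r = j - 1 \<and> g'!r = j)) \<and>
     (\<forall>r r'. r < length g \<longrightarrow> r' < r \<longrightarrow> g'!r \<noteq> g!r \<longrightarrow> g!r' = j - 1 \<longrightarrow> g'!r' \<noteq> g!r')"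

definition chg :: "nat list \<Rightarrow> nat list \<Rightarrow> nat" where
  "chg g g' = card {r. r < length g \<and> g'!r \<noteq> g!r}"

lemma batch_app:
  assumes "2 \<le> j" "batch_ok j g g'"
  shows "app (replicate (chg g g') j) g = Some g'"
  using assms(2)
proof (induction "chg g g'" arbitrary: g)
  case 0
  have "finite {r. r < length g \<and> g'!r \<noteq> g!r}" by simp
  then have "{r. r < length g \<and> g'!r \<noteq> g!r} = {}" using 0 unfolding chg_def by simp
  then have "g' = g" using 0(2) unfolding batch_ok_def by (auto intro: nth_equalityI)
  then show ?case using 0(1) by simp
next
  case (Suc k)
  let ?C = "{r. r < length g \<and> g'!r \<noteq> g!r}"
  have fin: "finite ?C" by simp
  have ne: "?C \<noteq> {}" using Suc(2) unfolding chg_def by (metis card.empty nat.distinct(1))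
  define r0 where "r0 = (LEAST r. r < length g \<and> g'!r \<noteq> g!r)"
  have r0: "r0 < length g" "g'!r0 \<noteq> g!r0" using ne LeastI_ex[of "\<lambda>r. r < length g \<and> g'!r \<noteq> g!r"]
    unfolding r0_def by auto
  have r0min: "\<And>r. r < r0 \<Longrightarrow> g'!r = g!r" using not_less_Least r0 unfolding r0_def
    by (metis (mono_tags, lifting) order.strict_trans)
  have gr0: "g!r0 = j - 1" "g'!r0 = j" using Suc(3) r0 unfolding batch_ok_def by auto
  have least: "(LEAST k. k < length g \<and> g ! k = j - 1) = r0"
  proof (rule Least_equality)
    show "r0 < length g \<and> g ! r0 = j - 1" using r0 gr0 by simp
    fix y assume y: "y < length g \<and> g ! y = j - 1"
    show "r0 \<le> y"
    proof (rule ccontr)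
      assume "\<not> r0 \<le> y"
      then have "y < r0" by simp
      then have "g'!y \<noteq> g!y" using Suc(3) y r0 unfolding batch_ok_def by blast
      then show False using r0min \<open>y < r0\<close> by simp
    qed
  qed
  have inset: "j - 1 \<in> set g" using r0 gr0 by (metis nth_mem)
  define g1 where "g1 = g[r0 := j]"
  have box: "box_add j g = Some g1"
    using assms(1) inset least gr0 unfolding box_add_def g1_def by (simp add: Let_def)
  have C1: "{r. r < length g1 \<and> g'!r \<noteq> g1!r} = ?C - {r0}"
    using gr0 r0 by (auto simp: g1_def nth_list_update)
  have "chg g1 g' = k"
    unfolding chg_def C1 using Suc(2) r0 fin unfolding chg_def by simp
  moreover have "batch_ok j g1 g'"
    using Suc(3) gr0 r0 unfolding batch_ok_def g1_def
    by (auto simp: nth_list_update)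
  ultimately have "app (replicate k j) g1 = Some g'" using Suc(1) by metis
  then show ?case using box Suc(2)[symmetric] by simp
qed



locale mid =
  fixes a0 b0 :: "nat list"
  assumes len: "length b0 = length a0"
    and pos: "\<And>r. r < length a0 \<Longrightarrow> 1 \<le> a0!r"
    and le: "\<And>r. r < length a0 \<Longrightarrow> a0!r \<le> b0!r"
    and ex: "\<exists>r<length a0. a0!r < b0!r"
    and N: "\<And>r j r'. r < length a0 \<Longrightarrow> a0!r < j \<Longrightarrow> j+1 \<le> b0!r \<Longrightarrow> r' < r \<Longrightarrow> \<not>(a0!r' < j \<and> j \<le> b0!r')"
    and L: "\<And>r r'. r < length a0 \<Longrightarrow> r' < r \<Longrightarrow> a0!r' = b0!r' \<Longrightarrow> a0!r \<le> a0!r' \<Longrightarrow> b0!r \<le> b0!r'"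
begin

definition T :: "nat \<Rightarrow> bool" where "T r \<longleftrightarrow> r < length a0 \<and> a0!r < b0!r"
definition bm :: nat where "bm = Max ((\<lambda>r. b0!r) ` {r. T r})"
definition top :: nat where "top = (LEAST r. T r \<and> b0!r = bm)"
definition e :: "nat \<Rightarrow> nat" where "e r = (if T r \<and> r \<noteq> top then b0!r - 1 else b0!r)"
definition Ust :: "nat \<Rightarrow> nat list" where "Ust j = map (\<lambda>r. max (a0!r) (min (e r) j)) [0..<length a0]"
definition Dst :: "nat \<Rightarrow> nat list" where "Dst j = map (\<lambda>r. if j \<le> b0!r then b0!r else e r) [0..<length a0]"
definition cU :: "nat \<Rightarrow> nat" where "cU j = chg (Ust (j-1)) (Ust j)"
definition cD :: "nat \<Rightarrow> nat" where "cD j = chg (Dst (Suc j)) (Dst j)"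
definition vU :: "nat list" where "vU = concat (map (\<lambda>j. replicate (cU j) j) [2..<Suc bm])"
definition vD :: "nat list" where "vD = concat (map (\<lambda>j. replicate (cD j) j) (rev [2..<Suc bm]))"

lemma finT: "finite {r. T r}" unfolding T_def by simp
lemma neT: "{r. T r} \<noteq> {}" using ex unfolding T_def by auto

lemma bm_ge: "T r \<Longrightarrow> b0!r \<le> bm"
  unfolding bm_def using finT by (intro Max_ge) auto

lemma bm_att: "\<exists>r. T r \<and> b0!r = bm"
proof -
  have "bm \<in> (\<lambda>r. b0!r) ` {r. T r}" unfolding bm_def using finT neT by (intro Max_in) auto
  then show ?thesis by auto
qed

lemma T_top: "T top" "b0!top = bm"
  using LeastI_ex[OF bm_att] unfolding top_def by auto

lemma top_least: "T r \<Longrightarrow> b0!r = bm \<Longrightarrow> top \<le> r"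
  unfolding top_def by (rule Least_le) simp

lemma bm2: "2 \<le> bm"
  using T_top pos unfolding T_def by fastforce

lemma e_ge: "r < length a0 \<Longrightarrow> a0!r \<le> e r"
  using le unfolding e_def T_def by auto
lemma e_le: "e r \<le> b0!r" unfolding e_def by auto
lemma e_nT: "r < length a0 \<Longrightarrow> \<not> T r \<Longrightarrow> e r = a0!r \<and> b0!r = a0!r"
  using le unfolding e_def T_def by (auto simp: not_less intro: antisym)
lemma e_T: "T r \<Longrightarrow> e r \<le> bm" using e_le bm_ge order.trans by blast
lemma e_top: "e top = bm" using T_top unfolding e_def by simp
lemma e_Tn: "T r \<Longrightarrow> r \<noteq> top \<Longrightarrow> e r = b0!r - 1" unfolding e_def by simp
lemma T_of_e: "r < length a0 \<Longrightarrow> a0!r < e r \<Longrightarrow> T r" using e_nT by fastforce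

lemma blocked:
  assumes r: "r < length a0" and j: "a0!r < j" "j \<le> e r" and r': "r' < r"
  shows "\<not>(a0!r' < j \<and> j \<le> b0!r')"
proof
  assume h: "a0!r' < j \<and> j \<le> b0!r'"
  have Tr: "T r" using T_of_e r j by simp
  show False
  proof (cases "r = top")
    case False
    then have "j + 1 \<le> b0!r" using e_Tn[OF Tr] j e_le[of r] by linarith
    then show False using N[OF r j(1) _ r'] h by blast
  next
    case True
    then have "j \<le> bm" using j e_top by simp
    show False
    proof (cases "j < bm")
      case True
      then have "j + 1 \<le> b0!r" using T_top \<open>r = top\<close> by simp
      then show False using N[OF r j(1) _ r'] h by blast
    next
      case False
      then have jb: "j = bm" using \<open>j \<le> bm\<close> by simp
      have Tr': "T r'" using h r r' unfolding T_def by auto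
      then have "b0!r' = bm" using bm_ge[OF Tr'] h jb by simp
      then have "top \<le> r'" using top_least Tr' by simp
      then show False using r' True by simp
    qed
  qed
qed

lemma Ust_nth: "r < length a0 \<Longrightarrow> Ust j ! r = max (a0!r) (min (e r) j)"
  unfolding Ust_def by simp
lemma Dst_nth: "r < length a0 \<Longrightarrow> Dst j ! r = (if j \<le> b0!r then b0!r else e r)"
  unfolding Dst_def by simp
lemma Ust_len[simp]: "length (Ust j) = length a0" unfolding Ust_def by simp
lemma Dst_len[simp]: "length (Dst j) = length a0" unfolding Dst_def by simp

lemma chU: "2 \<le> j \<Longrightarrow> {r. r < length (Ust (j-1)) \<and> Ust j ! r \<noteq> Ust (j-1) ! r}
   = {r. r < length a0 \<and> a0!r < j \<and> j \<le> e r}"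
  using e_ge by (auto simp: Ust_nth)

lemma chD_pt: assumes rl: "r < length a0" shows
  "(Dst j ! r \<noteq> Dst (Suc j) ! r) \<longleftrightarrow> (T r \<and> r \<noteq> top \<and> b0!r = j)"
proof (cases "T r \<and> r \<noteq> top")
  case True
  then have "e r = b0!r - 1" "a0!r < b0!r" using e_Tn unfolding T_def by auto
  then show ?thesis using True rl by (auto simp: Dst_nth)
next
  case False
  then have "e r = b0!r" unfolding e_def by auto
  then show ?thesis using False rl by (auto simp: Dst_nth)
qed

lemma chD: "{r. r < length (Dst (Suc j)) \<and> Dst j ! r \<noteq> Dst (Suc j) ! r}
   = {r. T r \<and> r \<noteq> top \<and> b0!r = j}"
  using chD_pt by (auto simp: T_def)

lemma U_step: assumes "2 \<le> j" "j \<le> bm" shows "batch_ok j (Ust (j-1)) (Ust j)"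
  unfolding batch_ok_def
proof (intro conjI allI impI)
  show "length (Ust j) = length (Ust (j - 1))" by simp
next
  fix r assume r: "r < length (Ust (j-1))"
  then show "Ust j ! r = Ust (j - 1) ! r \<or> Ust (j - 1) ! r = j - 1 \<and> Ust j ! r = j"
    using e_ge[of r] assms by (auto simp: Ust_nth)
next
  fix r r' assume r: "r < length (Ust (j-1))" and r': "r' < r"
    and ch: "Ust j ! r \<noteq> Ust (j - 1) ! r" and x: "Ust (j - 1) ! r' = j - 1"
  have rl: "r < length a0" "r' < length a0" using r r' by auto
  have rj: "a0!r < j" "j \<le> e r" using ch e_ge[of r] rl by (auto simp: Ust_nth)
  show "Ust j ! r' \<noteq> Ust (j - 1) ! r'"
  proof
    assume un: "Ust j ! r' = Ust (j - 1) ! r'"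
    have er': "e r' = j - 1" "a0!r' \<le> j - 1"
      using x un e_ge[of r'] rl assms by (auto simp: Ust_nth)
    show False
    proof (cases "T r'")
      case False
      then have "a0!r' = j - 1" "b0!r' = j - 1" using e_nT rl er' by auto
      then have "b0!r \<le> j - 1" using L[OF rl(1) r'] rj by simp
      then show False using rj e_le[of r] assms by linarith
    next
      case True
      show False
      proof (cases "r' = top")
        case False
        then have "b0!r' = j" using e_Tn[OF True] er' True assms unfolding T_def by auto
        then show False using blocked[OF rl(1) rj r'] True unfolding T_def by auto
      next
        case True
        then have "bm = j - 1" using e_top er' by simp
        moreover have "e r \<le> bm" using e_T T_of_e rl rj by auto
        ultimately show False using rj assms by linarith
      qed
    qed
  qed
qed

lemma D_step: assumes "2 \<le> j" "j \<le> bm" shows "batch_ok j (Dst (Suc j)) (Dst j)"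
  unfolding batch_ok_def
proof (intro conjI allI impI)
  show "length (Dst j) = length (Dst (Suc j))" by simp
next
  fix r assume r: "r < length (Dst (Suc j))"
  then have rl: "r < length a0" by simp
  show "Dst j ! r = Dst (Suc j) ! r \<or> Dst (Suc j) ! r = j - 1 \<and> Dst j ! r = j"
  proof (cases "T r \<and> r \<noteq> top")
    case True then show ?thesis using e_Tn[of r] rl by (auto simp: Dst_nth)
  next
    case False then show ?thesis using rl e_nT[OF rl] by (auto simp: Dst_nth e_def)
  qed
next
  fix r r' assume r: "r < length (Dst (Suc j))" and r': "r' < r"
    and ch: "Dst j ! r \<noteq> Dst (Suc j) ! r" and x: "Dst (Suc j) ! r' = j - 1"
  have rl: "r < length a0" "r' < length a0" using r r' by auto
  have "r \<in> {r. r < length (Dst (Suc j)) \<and> Dst j ! r \<noteq> Dst (Suc j) ! r}" using r ch by simp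
  then have Tr: "T r" "r \<noteq> top" "b0!r = j" using chD by auto
  have a0r: "a0!r < j" using Tr unfolding T_def by simp
  show "Dst j ! r' \<noteq> Dst (Suc j) ! r'"
  proof
    assume un: "Dst j ! r' = Dst (Suc j) ! r'"
    have b1: "\<not> Suc j \<le> b0!r'" using x assms by (auto simp: Dst_nth rl)
    have er': "e r' = j - 1" using x b1 by (simp add: Dst_nth rl)
    have b2: "b0!r' \<noteq> j"
    proof
      assume "b0!r' = j"
      then have "e r' = j" using un b1 by (simp add: Dst_nth rl)
      then show False using er' assms by simp
    qed
    have b3: "b0!r' = j - 1" using b1 b2 er' e_le[of r'] by linarith
    show False
    proof (cases "T r'")
      case False
      then have "a0!r' = j - 1" using e_nT rl b3 by auto
      then have "b0!r \<le> j - 1" using L[OF rl(1) r'] a0r b3 by simp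
      then show False using Tr assms by simp
    next
      case True
      show False
      proof (cases "r' = top")
        case False
        then have "e r' = b0!r' - 1" using e_Tn True by simp
        then show False using er' b3 assms by simp
      next
        case True
        then have "bm = j - 1" using T_top b3 by simp
        then show False using bm_ge[OF Tr(1)] Tr assms by simp
      qed
    qed
  qed
qed

lemma Ust1: "Ust 1 = a0"
  by (rule nth_equalityI) (auto simp: Ust_nth dest: pos)

lemma Ust_bm: "Ust bm = Dst (Suc bm)"
proof (rule nth_equalityI)
  fix r assume "r < length (Ust bm)"
  then have rl: "r < length a0" by simp
  show "Ust bm ! r = Dst (Suc bm) ! r"
  proof (cases "T r")
    case True
    then show ?thesis using bm_ge[OF True] e_T[OF True] e_ge[OF rl] rl by (auto simp: Ust_nth Dst_nth)
  next
    case False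
    then show ?thesis using e_nT[OF rl] rl by (auto simp: Ust_nth Dst_nth)
  qed
qed simp

lemma Dst2: "Dst 2 = b0"
proof (rule nth_equalityI)
  fix r assume "r < length (Dst 2)"
  then have rl: "r < length a0" by simp
  show "Dst 2 ! r = b0 ! r"
  proof (cases "2 \<le> b0!r")
    case False
    then have "\<not> T r" using pos[OF rl] unfolding T_def by auto
    then show ?thesis using e_nT[OF rl] rl False by (auto simp: Dst_nth)
  qed (simp add: Dst_nth rl)
qed (simp add: len)

lemma U_iter: "1 \<le> j \<Longrightarrow> j \<le> bm \<Longrightarrow>
   app (concat (map (\<lambda>j. replicate (cU j) j) [2..<Suc j])) a0 = Some (Ust j)"
proof (induction j)
  case 0 then show ?case by simp
next
  case (Suc j)
  show ?case
  proof (cases "j = 0")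
    case True then show ?thesis using Ust1 by simp
  next
    case False
    have "[2..<Suc (Suc j)] = [2..<Suc j] @ [Suc j]" using False by simp
    then have "app (concat (map (\<lambda>j. replicate (cU j) j) [2..<Suc (Suc j)])) a0
        = Option.bind (Some (Ust j)) (app (replicate (cU (Suc j)) (Suc j)))"
      using Suc False by (simp add: app_append)
    also have "\<dots> = Some (Ust (Suc j))"
      using batch_app[OF _ U_step[of "Suc j"]] Suc(3) False unfolding cU_def by simp
    finally show ?thesis .
  qed
qed

lemma D_iter: "k \<le> bm - 1 \<Longrightarrow>
   app (concat (map (\<lambda>j. replicate (cD j) j) (rev [Suc bm - k..<Suc bm]))) (Dst (Suc bm)) = Some (Dst (Suc bm - k))"
proof (induction k)
  case 0 then show ?case by simp
next
  case (Suc k)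
  define j where "j = bm - k"
  have j: "2 \<le> j" "j \<le> bm" "Suc bm - Suc k = j" "Suc bm - k = Suc j"
    using Suc(2) bm2 unfolding j_def by auto
  have "[j..<Suc bm] = j # [Suc j..<Suc bm]" using j by (simp add: upt_conv_Cons)
  then have "rev [Suc bm - Suc k..<Suc bm] = rev [Suc bm - k..<Suc bm] @ [j]" using j by simp
  then have "app (concat (map (\<lambda>j. replicate (cD j) j) (rev [Suc bm - Suc k..<Suc bm]))) (Dst (Suc bm))
     = Option.bind (Some (Dst (Suc j))) (app (replicate (cD j) j))"
    using Suc j by (simp add: app_append)
  also have "\<dots> = Some (Dst j)"
    using batch_app[OF _ D_step[of j]] j unfolding cD_def by simp
  finally show ?case using j by simp
qed

lemma app_mid: "app (vU @ vD) a0 = Some b0"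
proof -
  have "app vU a0 = Some (Ust bm)" unfolding vU_def using U_iter[of bm] bm2 by simp
  moreover have "Suc bm - (bm - 1) = 2" using bm2 by simp
  then have X: "app vD (Dst (Suc bm)) = Some (Dst 2)"
    unfolding vD_def using D_iter[of "bm - 1"] by simp
  ultimately show ?thesis using X by (simp add: app_append Ust_bm Dst2)
qed

end



lemma cr_filter: "(\<forall>j\<in>set xs. f j \<le> 1) \<Longrightarrow> concat (map (\<lambda>j. replicate (f j) j) xs) = filter (\<lambda>j. f j = 1) xs"
proof (induction xs)
  case (Cons a xs)
  then have "f a = 0 \<or> f a = 1" by auto
  then show ?case using Cons by auto
qed simp

lemma cr_set: "set (concat (map (\<lambda>j. replicate (f j) j) xs)) = {j \<in> set xs. 0 < f j}"
  by auto

lemma rep_sorted: "sorted_wrt (\<lambda>x y. y \<le> x) (replicate k (a::nat))"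
  by (induction k) auto

lemma cr_sorted: "sorted_wrt (\<ge>) xs \<Longrightarrow> sorted_wrt (\<ge>) (concat (map (\<lambda>j. replicate (f j) (j::nat)) xs))"
proof (induction xs)
  case (Cons a xs)
  then show ?case by (auto simp: sorted_wrt_append rep_sorted)
qed simp

context mid begin

lemma finL: "finite {r. r < length a0 \<and> P r}" by simp

lemma cU_eq: "2 \<le> j \<Longrightarrow> cU j = card {r. r < length a0 \<and> a0!r < j \<and> j \<le> e r}"
  unfolding cU_def chg_def using chU by simp

lemma cD_eq: "cD j = card {r. T r \<and> r \<noteq> top \<and> b0!r = j}"
  unfolding cD_def chg_def using chD by simp

lemma uniqU: "r1 < length a0 \<Longrightarrow> a0!r1 < j \<Longrightarrow> j \<le> e r1 \<Longrightarrow>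
   r2 < length a0 \<Longrightarrow> a0!r2 < j \<Longrightarrow> j \<le> e r2 \<Longrightarrow> r1 = r2"
proof (rule ccontr)
  assume a: "r1 < length a0" "a0!r1 < j" "j \<le> e r1" "r2 < length a0" "a0!r2 < j" "j \<le> e r2" "r1 \<noteq> r2"
  show False
  proof (cases "r1 < r2")
    case True
    then show False using blocked[of r2 j r1] a e_le[of r1] by linarith
  next
    case False
    then have "r2 < r1" using a by simp
    then show False using blocked[of r1 j r2] a e_le[of r2] by linarith
  qed
qed

lemma cU_le1: "2 \<le> j \<Longrightarrow> cU j \<le> 1"
proof -
  assume j: "2 \<le> j"
  have fin: "finite {r. r < length a0 \<and> a0!r < j \<and> j \<le> e r}" by simp
  have "card {r. r < length a0 \<and> a0!r < j \<and> j \<le> e r} \<le> Suc 0"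
    using uniqU by (subst card_le_Suc0_iff_eq[OF fin]) blast
  then show ?thesis using cU_eq[OF j] by simp
qed

lemma cU_bm: "cU bm = 1"
proof -
  have t: "top < length a0" "a0!top < bm" "bm \<le> e top" using T_top e_top unfolding T_def by auto
  have "{r. r < length a0 \<and> a0!r < bm \<and> bm \<le> e r} = {top}"
  proof (intro set_eqI iffI)
    fix r assume "r \<in> {r. r < length a0 \<and> a0!r < bm \<and> bm \<le> e r}"
    then show "r \<in> {top}" using uniqU[of r bm top] t by auto
  qed (use t in auto)
  then show ?thesis using cU_eq bm2 by simp
qed

lemma vU_filter: "vU = filter (\<lambda>j. cU j = 1) [2..<Suc bm]"
  unfolding vU_def by (rule cr_filter) (use cU_le1 in auto)

lemma vU_sorted: "sorted_wrt (<) vU"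
  unfolding vU_filter by (rule sorted_wrt_filter) (rule sorted_wrt_upt)

lemma vU_last: "vU \<noteq> [] \<and> last vU = bm"
proof -
  have "[2..<Suc bm] = [2..<bm] @ [bm]" using bm2 by simp
  then show ?thesis unfolding vU_filter using cU_bm by simp
qed

lemma vD_sorted: "sorted_wrt (\<ge>) vD"
proof -
  have "sorted_wrt (<) [2..<Suc bm]" by (rule sorted_wrt_upt)
  then have "sorted_wrt (\<le>) [2..<Suc bm]" by (rule sorted_wrt_mono_rel[rotated]) auto
  then have "sorted_wrt (\<ge>) (rev [2..<Suc bm])" by (simp only: sorted_wrt_rev)
  then show ?thesis unfolding vD_def by (rule cr_sorted)
qed

lemma set_v: "set (vU @ vD) = {j. \<exists>r<length a0. a0!r < j \<and> j \<le> b0!r}"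
proof (intro set_eqI iffI)
  fix j assume "j \<in> set (vU @ vD)"
  then consider "j \<in> {2..bm}" "0 < cU j" | "j \<in> {2..bm}" "0 < cD j"
    unfolding vU_def vD_def cr_set by auto
  then show "j \<in> {j. \<exists>r<length a0. a0!r < j \<and> j \<le> b0!r}"
  proof cases
    case 1
    then have "{r. r < length a0 \<and> a0!r < j \<and> j \<le> e r} \<noteq> {}" using cU_eq by fastforce
    then obtain r where "r < length a0" "a0!r < j" "j \<le> e r" by blast
    then show ?thesis using e_le[of r] by auto
  next
    case 2
    then have "{r. T r \<and> r \<noteq> top \<and> b0!r = j} \<noteq> {}" using cD_eq by fastforce
    then show ?thesis unfolding T_def by auto
  qed
next
  fix j assume "j \<in> {j. \<exists>r<length a0. a0!r < j \<and> j \<le> b0!r}"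
  then obtain r where r: "r < length a0" "a0!r < j" "j \<le> b0!r" by auto
  have Tr: "T r" using r unfolding T_def by auto
  have j: "j \<in> {2..bm}" using r pos[of r] bm_ge[OF Tr] by auto
  show "j \<in> set (vU @ vD)"
  proof (cases "j \<le> e r")
    case True
    have "r \<in> {r. r < length a0 \<and> a0!r < j \<and> j \<le> e r}" using r True by simp
    then have "0 < cU j" using cU_eq j by (auto simp: card_gt_0_iff)
    then show ?thesis unfolding vU_def using j by auto
  next
    case False
    have "r \<noteq> top" using False r e_top T_top by auto
    then have "e r = b0!r - 1" using e_Tn Tr by simp
    then have "b0!r = j" using False r by linarith
    then have "r \<in> {r. T r \<and> r \<noteq> top \<and> b0!r = j}" using Tr \<open>r \<noteq> top\<close> by simp
    then have "0 < cD j" unfolding cD_eq using finT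
      by (subst card_gt_0_iff) (auto intro: finite_subset[OF _ finT])
    then show ?thesis unfolding vD_def using j by auto
  qed
qed

lemma set_v_bound: "x \<in> set (vU @ vD) \<Longrightarrow> 2 \<le> x \<and> x \<le> bm"
  unfolding vU_def vD_def cr_set by auto

end



definition cinv :: "comp \<Rightarrow> comp \<Rightarrow> bool" where
  "cinv \<alpha> \<delta> \<longleftrightarrow> length \<alpha> \<le> length \<delta> \<and>
     (\<forall>i<length \<alpha>. \<alpha>!i \<le> \<delta>!(length \<delta> - length \<alpha> + i)) \<and>
     (\<forall>i2 i. i2 < i \<longrightarrow> i < length \<alpha> \<longrightarrow> \<alpha>!i \<le> \<alpha>!i2 \<longrightarrow>
        \<delta>!(length \<delta> - length \<alpha> + i) \<le> \<delta>!(length \<delta> - length \<alpha> + i2)) \<and>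
     (\<forall>r < length \<delta> - length \<alpha>. 1 \<le> \<delta>!r)"

lemma inv_refl: "cinv \<alpha> \<alpha>" unfolding cinv_def by auto

lemma inv_step:
  assumes I: "cinv \<alpha> \<gamma>" and C: "ccover \<gamma> \<delta>"
  shows "cinv \<alpha> \<delta>"
  using C unfolding ccover_def
proof (elim disjE exE conjE)
  assume d: "\<delta> = 1 # \<gamma>"
  have le: "length \<alpha> \<le> length \<gamma>" using I unfolding cinv_def by simp
  then have m: "length \<delta> - length \<alpha> = Suc (length \<gamma> - length \<alpha>)" using d by simp
  have nth: "\<And>i. \<delta> ! (length \<delta> - length \<alpha> + i) = \<gamma> ! (length \<gamma> - length \<alpha> + i)"
    unfolding d using le by (simp add: Suc_diff_le)
  show ?thesis unfolding cinv_def nth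
  proof (intro conjI allI impI)
    show "length \<alpha> \<le> length \<delta>" using le d by simp
    fix r assume "r < length \<delta> - length \<alpha>"
    then show "1 \<le> \<delta> ! r" using I d m unfolding cinv_def by (cases r) auto
  next
    fix i assume "i < length \<alpha>"
    then show "\<alpha> ! i \<le> \<gamma> ! (length \<gamma> - length \<alpha> + i)" using I unfolding cinv_def by blast
  next
    fix i2 i assume "i2 < i" "i < length \<alpha>" "\<alpha> ! i \<le> \<alpha> ! i2"
    then show "\<gamma> ! (length \<gamma> - length \<alpha> + i) \<le> \<gamma> ! (length \<gamma> - length \<alpha> + i2)"
      using I unfolding cinv_def by blast
  qed
next
  fix k assume k: "k < length \<gamma>" and d: "\<delta> = \<gamma>[k := \<gamma> ! k + 1]"
    and lf: "\<forall>i<k. \<gamma> ! i \<noteq> \<gamma> ! k"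
  have len: "length \<delta> = length \<gamma>" using d by simp
  have dn: "\<And>x. x < length \<gamma> \<Longrightarrow> \<delta>!x = \<gamma>!x + (if x = k then 1 else 0)"
    using d k by (auto simp: nth_list_update)
  have le: "length \<alpha> \<le> length \<gamma>" using I unfolding cinv_def by simp
  define m where "m = length \<gamma> - length \<alpha>"
  have I2: "\<And>i2 i. i2 < i \<Longrightarrow> i < length \<alpha> \<Longrightarrow> \<alpha>!i \<le> \<alpha>!i2 \<Longrightarrow> \<gamma>!(m + i) \<le> \<gamma>!(m + i2)"
    using I unfolding cinv_def m_def by blast
  show ?thesis unfolding cinv_def len m_def[symmetric]
  proof (intro conjI allI impI)
    show "length \<alpha> \<le> length \<gamma>" by (rule le)
  next
    fix i assume i: "i < length \<alpha>"
    then have "\<alpha>!i \<le> \<gamma>!(m+i)" using I unfolding cinv_def m_def by blast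
    then show "\<alpha>!i \<le> \<delta>!(m+i)" using dn[of "m+i"] i le unfolding m_def by auto
  next
    fix r assume r: "r < m"
    then have "1 \<le> \<gamma>!r" using I unfolding cinv_def m_def by blast
    then show "1 \<le> \<delta>!r" using dn[of r] r le unfolding m_def by auto
  next
    fix i2 i assume a: "i2 < i" "i < length \<alpha>" "\<alpha>!i \<le> \<alpha>!i2"
    have g: "\<gamma>!(m + i) \<le> \<gamma>!(m + i2)" using I2[OF a] .
    have b: "m + i < length \<gamma>" "m + i2 < length \<gamma>" using a le unfolding m_def by auto
    show "\<delta>!(m + i) \<le> \<delta>!(m + i2)"
    proof (cases "m + i = k")
      case True
      then have "\<gamma>!(m+i2) \<noteq> \<gamma>!(m+i)" using lf a by auto
      then show ?thesis using True g dn[OF b(1)] dn[OF b(2)] a by auto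
    next
      case False
      then show ?thesis using g dn[OF b(1)] dn[OF b(2)] by auto
    qed
  qed
qed

lemma clt_inv: "clt \<alpha> \<beta> \<Longrightarrow> cinv \<alpha> \<beta>"
  unfolding clt_def
proof (induction rule: tranclp_induct)
  case (base y) then show ?case using inv_step[OF inv_refl] by blast
next
  case (step y z) then show ?case using inv_step by blast
qed


definition ext :: "comp \<Rightarrow> comp \<Rightarrow> nat list" where
  "ext \<alpha> \<beta> = replicate (length \<beta> - length \<alpha>) 0 @ \<alpha>"

lemma skew_eq:
  assumes "cinv \<alpha> \<beta>"
  shows "skew \<beta> \<alpha> = {(i, j). 1 \<le> i \<and> i \<le> length \<beta> \<and> ext \<alpha> \<beta> ! (i-1) < j \<and> j \<le> \<beta>!(i-1)}"
proof -
  define m where "m = length \<beta> - length \<alpha>"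
  have le: "length \<alpha> \<le> length \<beta>" using assms unfolding cinv_def by simp
  have ext1: "\<And>i. i < m \<Longrightarrow> ext \<alpha> \<beta> ! i = 0" unfolding ext_def m_def by (simp add: nth_append)
  have ext2: "\<And>i. m \<le> i \<Longrightarrow> ext \<alpha> \<beta> ! i = \<alpha> ! (i - m)" unfolding ext_def m_def by (simp add: nth_append)
  have inner: "inner_shape \<alpha> \<beta> = {(i, j). m < i \<and> i \<le> length \<beta> \<and> 1 \<le> j \<and> j \<le> \<alpha>!(i - m - 1)}"
    unfolding inner_shape_def m_def[symmetric]
  proof (intro set_eqI iffI)
    fix x assume "x \<in> {(m + i, j) |i j. 1 \<le> i \<and> i \<le> length \<alpha> \<and> 1 \<le> j \<and> j \<le> \<alpha> ! (i - 1)}"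
    then show "x \<in> {(i, j). m < i \<and> i \<le> length \<beta> \<and> 1 \<le> j \<and> j \<le> \<alpha>!(i - m - 1)}"
      using le unfolding m_def by auto
  next
    fix x assume "x \<in> {(i, j). m < i \<and> i \<le> length \<beta> \<and> 1 \<le> j \<and> j \<le> \<alpha>!(i - m - 1)}"
    then obtain i j where x: "x = (i, j)" "m < i" "i \<le> length \<beta>" "1 \<le> j" "j \<le> \<alpha>!(i - m - 1)" by auto
    then show "x \<in> {(m + i, j) |i j. 1 \<le> i \<and> i \<le> length \<alpha> \<and> 1 \<le> j \<and> j \<le> \<alpha> ! (i - 1)}"
      using le unfolding m_def
      by (intro CollectI exI[of _ "i - m"] exI[of _ j]) (auto simp: m_def)
  qed
  show ?thesis
  proof (intro set_eqI iffI)
    fix x assume "x \<in> skew \<beta> \<alpha>"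
    then obtain i j where x: "x = (i, j)" "1 \<le> i" "i \<le> length \<beta>" "1 \<le> j" "j \<le> \<beta>!(i-1)"
      and ni: "(i, j) \<notin> inner_shape \<alpha> \<beta>"
      unfolding skew_def diagram_def by auto
    have "ext \<alpha> \<beta> ! (i-1) < j"
    proof (cases "i \<le> m")
      case True then show ?thesis using ext1[of "i-1"] x by simp
    next
      case False then show ?thesis using ext2[of "i-1"] ni x unfolding inner by auto
    qed
    then show "x \<in> {(i, j). 1 \<le> i \<and> i \<le> length \<beta> \<and> ext \<alpha> \<beta> ! (i-1) < j \<and> j \<le> \<beta>!(i-1)}"
      using x by simp
  next
    fix x assume "x \<in> {(i, j). 1 \<le> i \<and> i \<le> length \<beta> \<and> ext \<alpha> \<beta> ! (i-1) < j \<and> j \<le> \<beta>!(i-1)}"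
    then obtain i j where x: "x = (i, j)" "1 \<le> i" "i \<le> length \<beta>" "ext \<alpha> \<beta> ! (i-1) < j" "j \<le> \<beta>!(i-1)"
      by auto
    have "(i, j) \<notin> inner_shape \<alpha> \<beta>"
    proof
      assume "(i, j) \<in> inner_shape \<alpha> \<beta>"
      then have "m < i" "j \<le> \<alpha>!(i - m - 1)" unfolding inner by auto
      then show False using ext2[of "i-1"] x by simp
    qed
    then show "x \<in> skew \<beta> \<alpha>" using x unfolding skew_def diagram_def by auto
  qed
qed

lemma ext_le: assumes I: "cinv \<alpha> \<beta>" and r: "r < length \<beta>" shows "ext \<alpha> \<beta> ! r \<le> \<beta> ! r"
proof (cases "r < length \<beta> - length \<alpha>")
  case True then show ?thesis unfolding ext_def by (simp add: nth_append)
next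
  case False
  define i where "i = r - (length \<beta> - length \<alpha>)"
  have i: "i < length \<alpha>" "r = length \<beta> - length \<alpha> + i" using False r I unfolding i_def cinv_def by auto
  then have "\<alpha>!i \<le> \<beta>!r" using I unfolding cinv_def by auto
  then show ?thesis using False unfolding ext_def i_def by (simp add: nth_append)
qed

lemma card_skew:
  assumes I: "cinv \<alpha> \<beta>"
  shows "card (skew \<beta> \<alpha>) = sum_list \<beta> - sum_list \<alpha>"
proof -
  let ?A = "SIGMA r:{..<length \<beta>}. {ext \<alpha> \<beta> ! r<..\<beta>!r}"
  have "skew \<beta> \<alpha> = (\<lambda>(r, j). (Suc r, j)) ` ?A"
    unfolding skew_eq[OF I]
  proof (intro set_eqI iffI)
    fix x assume "x \<in> {(i, j). 1 \<le> i \<and> i \<le> length \<beta> \<and> ext \<alpha> \<beta> ! (i-1) < j \<and> j \<le> \<beta>!(i-1)}"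
    then obtain i j where x: "x = (i,j)" "1 \<le> i" "i \<le> length \<beta>" "ext \<alpha> \<beta> ! (i-1) < j" "j \<le> \<beta>!(i-1)" by auto
    then show "x \<in> (\<lambda>(r, j). (Suc r, j)) ` ?A"
      by (intro image_eqI[of _ _ "(i - 1, j)"]) auto
  qed auto
  moreover have "inj_on (\<lambda>(r, j). (Suc r, j)) ?A" by (auto simp: inj_on_def)
  ultimately have "card (skew \<beta> \<alpha>) = (\<Sum>r<length \<beta>. \<beta>!r - ext \<alpha> \<beta> ! r)"
    by (simp add: card_image)
  also have "\<dots> = (\<Sum>r<length \<beta>. \<beta>!r) - (\<Sum>r<length \<beta>. ext \<alpha> \<beta> ! r)"
    by (rule sum_subtractf_nat) (use ext_le[OF I] in auto)
  also have "(\<Sum>r<length \<beta>. \<beta>!r) = sum_list \<beta>" by (simp add: sum_list_sum_nth atLeast0LessThan)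
  also have "(\<Sum>r<length \<beta>. ext \<alpha> \<beta> ! r) = sum_list (ext \<alpha> \<beta>)"
  proof -
    have "length (ext \<alpha> \<beta>) = length \<beta>" using I unfolding cinv_def ext_def by simp
    then show ?thesis by (metis sum_list_sum_nth atLeast0LessThan)
  qed
  also have "sum_list (ext \<alpha> \<beta>) = sum_list \<alpha>" unfolding ext_def by simp
  finally show ?thesis .
qed


lemma rhw_lemma:
  assumes "sorted A" "sorted_wrt (>) B" "B \<noteq> []" "\<forall>x\<in>set A. x \<le> hd B"
  shows "reverse_hookword (A @ B)"
  unfolding reverse_hookword_def
proof (intro exI[of _ "length A"] conjI allI impI)
  show "length A < length (A @ B)" using assms(3) by simp
next
  fix j assume j: "j < length A"
  show "(A @ B) ! j \<le> (A @ B) ! (j + 1)"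
  proof (cases "j + 1 < length A")
    case True then show ?thesis using assms(1) j by (simp add: nth_append sorted_iff_nth_mono)
  next
    case False
    then have "j + 1 = length A" using j by simp
    then show ?thesis using assms(3,4) j by (simp add: nth_append hd_conv_nth)
  qed
next
  fix j assume j: "length A \<le> j \<and> j + 1 < length (A @ B)"
  have e1: "(A @ B) ! j = B ! (j - length A)" using j by (simp add: nth_append)
  have e2: "(A @ B) ! (j + 1) = B ! (j - length A + 1)" using j by (simp add: nth_append Suc_diff_le)
  have "j - length A + 1 < length B" using j by auto
  then have "B ! (j - length A + 1) < B ! (j - length A)"
    using assms(2) unfolding sorted_wrt_iff_nth_less by auto
  then show "(A @ B) ! (j + 1) < (A @ B) ! j" using e1 e2 by simp
qed

lemma interval_lemma:
  assumes "finite X" "X \<noteq> {}" "\<And>x y z. x \<in> X \<Longrightarrow> z \<in> X \<Longrightarrow> x \<le> y \<Longrightarrow> y \<le> z \<Longrightarrow> y \<in> X"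
  shows "X = {Min X..Max X::nat}"
proof (intro set_eqI iffI)
  fix y assume "y \<in> {Min X..Max X}"
  then show "y \<in> X" using assms(3)[of "Min X" "Max X" y] Min_in[OF assms(1,2)] Max_in[OF assms(1,2)] by simp
next
  fix y assume "y \<in> X"
  then show "y \<in> {Min X..Max X}" using Min_le[OF assms(1)] Max_ge[OF assms(1)] by simp
qed



theorem mainTheorem6:
  fixes \<alpha> \<beta> :: comp and n :: nat
  assumes "is_comp \<alpha>" and "1 \<le> n"
    and "clt \<alpha> \<beta>"
    and "nc_border_strip (skew \<beta> \<alpha>)"
    and "card (skew \<beta> \<alpha>) = n"
  shows "\<exists>w \<in> CRHW n. word_act w \<alpha> = Some \<beta>"
proof -
  note comp = assms(1) and n1 = assms(2) and cl = assms(3) and nc = assms(4) and cd = assms(5)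
  have I: "cinv \<alpha> \<beta>" using clt_inv[OF cl] .
  define S where "S = skew \<beta> \<alpha>"
  define m where "m = length \<beta> - length \<alpha>"
  define xt where "xt = ext \<alpha> \<beta>"
  have la: "length \<alpha> \<le> length \<beta>" using I unfolding cinv_def by simp
  have lb: "length \<beta> = m + length \<alpha>" using la unfolding m_def by simp
  have posa: "\<And>i. i < length \<alpha> \<Longrightarrow> 1 \<le> \<alpha>!i"
  proof -
    fix i assume "i < length \<alpha>"
    then have "\<alpha>!i \<in> set \<alpha>" by (rule nth_mem)
    then show "1 \<le> \<alpha>!i" using comp unfolding is_comp_def by (simp add: Suc_le_eq)
  qed
  have Sd: "\<And>i j. (i,j) \<in> S \<longleftrightarrow> 1 \<le> i \<and> i \<le> length \<beta> \<and> xt!(i-1) < j \<and> j \<le> \<beta>!(i-1)"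
    unfolding S_def xt_def skew_eq[OF I] by simp
  have xt1: "\<And>r. r < m \<Longrightarrow> xt!r = 0" unfolding xt_def ext_def m_def by (simp add: nth_append)
  have xt2: "\<And>r. m \<le> r \<Longrightarrow> xt!r = \<alpha>!(r - m)" unfolding xt_def ext_def m_def by (simp add: nth_append)
  have bp: "\<And>r. r < m \<Longrightarrow> 1 \<le> \<beta>!r" using I unfolding cinv_def m_def by blast
  have ba: "\<And>i. i < length \<alpha> \<Longrightarrow> \<alpha>!i \<le> \<beta>!(m+i)" using I unfolding cinv_def m_def by blast
  have mono: "\<And>i2 i. i2 < i \<Longrightarrow> i < length \<alpha> \<Longrightarrow> \<alpha>!i \<le> \<alpha>!i2 \<Longrightarrow> \<beta>!(m+i) \<le> \<beta>!(m+i2)"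
    using I unfolding cinv_def m_def by blast
  have ncard: "n = sum_list \<beta> - sum_list \<alpha>" using cd card_skew[OF I] by simp

  have ncall: "interval_shape S \<and> (\<forall>i. (i, 1) \<in> S \<and> (i, 2) \<in> S \<longrightarrow> i = Max {r. (r, 1) \<in> S}) \<and>
     (\<forall>i j. 2 \<le> j \<and> (i, j) \<in> S \<and> (i, j + 1) \<in> S \<longrightarrow> i = Min {r. (r, j) \<in> S})"
    using nc unfolding S_def nc_border_strip_def by assumption
  have ncI: "interval_shape S" using ncall by (rule conjunct1)
  have nc1: "\<And>i. (i, 1) \<in> S \<Longrightarrow> (i, 2) \<in> S \<Longrightarrow> i = Max {r. (r, 1) \<in> S}"
    using ncall[THEN conjunct2, THEN conjunct1] by blast
  have nc2: "\<And>i j. 2 \<le> j \<Longrightarrow> (i, j) \<in> S \<Longrightarrow> (i, j + 1) \<in> S \<Longrightarrow> i = Min {r. (r, j) \<in> S}"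
    using ncall[THEN conjunct2, THEN conjunct2] by blast
  have col1: "\<And>i. (i,1) \<in> S \<longleftrightarrow> 1 \<le> i \<and> i \<le> m"
  proof -
    fix i
    show "(i,1) \<in> S \<longleftrightarrow> 1 \<le> i \<and> i \<le> m"
    proof (cases "1 \<le> i \<and> i \<le> m")
      case True then show ?thesis using Sd xt1[of "i-1"] bp[of "i-1"] lb by auto
    next
      case False
      show ?thesis
      proof (cases "1 \<le> i \<and> i \<le> length \<beta>")
        case True
        then have "m \<le> i - 1" "i - 1 - m < length \<alpha>" using False lb by auto
        then show ?thesis using Sd xt2[of "i-1"] posa[of "i-1-m"] False by auto
      qed (use Sd False in auto)
    qed
  qed
  have P1: "\<And>r. r + 1 < m \<Longrightarrow> \<beta>!r = 1"
  proof -
    fix r assume r: "r + 1 < m"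
    have eq: "{i. (i,1) \<in> S} = {1..m}"
    proof (rule set_eqI)
      fix x show "x \<in> {i. (i,1) \<in> S} \<longleftrightarrow> x \<in> {1..m}"
        unfolding mem_Collect_eq atLeastAtMost_iff by (rule col1)
    qed
    have Mx: "Max {i. (i,1) \<in> S} = m" unfolding eq using r by (intro Max_eqI) auto
    show "\<beta>!r = 1"
    proof (rule ccontr)
      assume "\<beta>!r \<noteq> 1"
      then have b2: "2 \<le> \<beta>!r" using bp[of r] r by simp
      have x0: "xt!r = 0" using xt1[of r] r by simp
      have rl: "r + 1 \<le> length \<beta>" using r lb by simp
      have "(r+1, 1) \<in> S" using Sd[of "r+1" 1] x0 rl b2 by simp
      moreover have "(r+1, 2) \<in> S" using Sd[of "r+1" 2] x0 rl b2 by simp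
      ultimately have "r + 1 = Max {i. (i,1) \<in> S}" by (rule nc1)
      then show False using Mx r by simp
    qed
  qed
  have P2: "\<And>i j i2. 2 \<le> j \<Longrightarrow> (i,j) \<in> S \<Longrightarrow> (i,j+1) \<in> S \<Longrightarrow> (i2,j) \<in> S \<Longrightarrow> i \<le> i2"
  proof -
    fix i j i2 assume a: "2 \<le> j" "(i,j) \<in> S" "(i,j+1) \<in> S" "(i2,j) \<in> S"
    have "i = Min {r. (r,j) \<in> S}" using nc2 a by blast
    moreover have "finite {r. (r,j) \<in> S}"
      by (rule finite_subset[of _ "{1..length \<beta>}"]) (use Sd in auto)
    ultimately show "i \<le> i2" using a(4) by simp
  qed
  define cc where "cc \<longleftrightarrow> 1 \<le> m \<and> 2 \<le> \<beta>!(m-1)"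
  define c where "c = (if cc then 1 else 0::nat)"
  define d where "d = m - c"
  have c_le: "c \<le> m" "c \<le> 1" unfolding c_def cc_def by auto
  have c1': "c = 1 \<Longrightarrow> cc" unfolding c_def by (cases cc) simp_all
  have c0': "c = 0 \<Longrightarrow> \<not> cc" unfolding c_def by (cases cc) simp_all
  have c1: "c = 1 \<Longrightarrow> 1 \<le> m \<and> 2 \<le> \<beta>!(m-1)" using c1' cc_def by blast
  have c0: "c = 0 \<Longrightarrow> \<not> (1 \<le> m \<and> 2 \<le> \<beta>!(m-1))" using c0' cc_def by blast
  have c01: "c = 0 \<or> c = 1" unfolding c_def by simp
  have tk: "take d \<beta> = replicate d 1"
  proof (rule nth_equalityI)
    show "length (take d \<beta>) = length (replicate d 1)" using lb unfolding d_def by simp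
  next
    fix r assume "r < length (take d \<beta>)"
    then have r: "r < d" by simp
    have "\<beta>!r = 1"
    proof (cases "r + 1 < m")
      case True then show ?thesis using P1 by simp
    next
      case False
      then have "c = 0" "r = m - 1" "1 \<le> m" using r c_le unfolding d_def by auto
      then show ?thesis using bp[of r] c0 by simp
    qed
    then show "take d \<beta> ! r = replicate d 1 ! r" using r by simp
  qed
  have beq: "\<beta> = replicate d 1 @ drop d \<beta>" using tk by (metis append_take_drop_id)
  define a0 where "a0 = replicate c 1 @ \<alpha>"
  define b0 where "b0 = drop d \<beta>"
  have la0: "length a0 = c + length \<alpha>" unfolding a0_def by simp
  have lb0: "length b0 = length a0" unfolding b0_def la0 d_def using lb c_le by simp
  have a0n: "\<And>r. r < length a0 \<Longrightarrow> a0!r = (if r < c then 1 else \<alpha>!(r-c))"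
    unfolding a0_def by (simp add: nth_append)
  have b0n: "\<And>r. r < length a0 \<Longrightarrow> b0!r = \<beta>!(d+r)"
    unfolding b0_def using lb la0 c_le d_def by simp
  have idx: "\<And>r. c \<le> r \<Longrightarrow> d + r = m + (r - c)" unfolding d_def using c_le by simp
  have idx0: "\<And>r. r < c \<Longrightarrow> r = 0 \<and> d = m - 1 \<and> c = 1" unfolding d_def using c_le by auto
  have dr: "\<And>r. r < length a0 \<Longrightarrow> d + r < length \<beta>" using la0 lb c_le unfolding d_def by simp
  have xta: "\<And>r. r < length a0 \<Longrightarrow> xt!(d+r) \<le> a0!r"
  proof -
    fix r assume r: "r < length a0"
    show "xt!(d+r) \<le> a0!r"
    proof (cases "r < c")
      case True
      then have q: "r = 0" "d = m - 1" "c = 1" using idx0[OF True] by auto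
      then have "xt!(m-1) = 0" "a0!r = 1" using xt1[of "m-1"] c1 a0n[OF r] by auto
      then show ?thesis using q by simp
    next
      case False then show ?thesis using idx[of r] xt2[of "d+r"] a0n[OF r] by simp
    qed
  qed
  have a0pos: "\<And>r. r < length a0 \<Longrightarrow> 1 \<le> a0!r" using a0n posa la0 by auto
  have le0: "\<And>r. r < length a0 \<Longrightarrow> a0!r \<le> b0!r"
  proof -
    fix r assume r: "r < length a0"
    show "a0!r \<le> b0!r"
    proof (cases "r < c")
      case True then show ?thesis using idx0[OF True] c1 a0n[OF r] b0n[OF r] by simp
    next
      case False then show ?thesis using idx[of r] ba[of "r-c"] a0n[OF r] b0n[OF r] r la0 by simp
    qed
  qed
  have app1: "app (replicate c 1) \<alpha> = Some a0" unfolding a0_def by (rule app_ones)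
  have supp_eq_help: "supp S = {j. \<exists>i. (i,j) \<in> S}" unfolding supp_def by force
  have finS: "finite S" and neS: "S \<noteq> {}" using cd n1 unfolding S_def
    by (auto intro: card_ge_0_finite)
  have suppI: "\<And>x y z. x \<in> supp S \<Longrightarrow> z \<in> supp S \<Longrightarrow> x \<le> y \<Longrightarrow> y \<le> z \<Longrightarrow> y \<in> supp S"
    using ncI unfolding interval_shape_def by blast
  have finsupp: "finite (supp S)" "supp S \<noteq> {}" using finS neS unfolding supp_def by auto
  have ivl: "supp S = {Min (supp S)..Max (supp S)}"
    by (rule interval_lemma[OF finsupp(1) finsupp(2)]) (rule suppI)
  have conn: "\<And>w. set w = supp S \<Longrightarrow> connected_word w"
    unfolding connected_word_def using ivl by blast
  show ?thesis
  proof (cases "\<exists>r<length a0. a0!r < b0!r")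
    case True
    interpret M: mid a0 b0
    proof
      show "length b0 = length a0" by (rule lb0)
      show "\<And>r. r < length a0 \<Longrightarrow> 1 \<le> a0!r" by (rule a0pos)
      show "\<And>r. r < length a0 \<Longrightarrow> a0!r \<le> b0!r" by (rule le0)
      show "\<exists>r<length a0. a0!r < b0!r" by (rule True)
    next
      fix r j r' assume a: "r < length a0" "a0!r < j" "j + 1 \<le> b0!r" "r' < r"
      show "\<not>(a0!r' < j \<and> j \<le> b0!r')"
      proof
        assume b: "a0!r' < j \<and> j \<le> b0!r'"
        have r': "r' < length a0" using a by simp
        have j2: "2 \<le> j" using a0pos[OF a(1)] a by simp
        have "(d+r+1, j) \<in> S" "(d+r+1, j+1) \<in> S" "(d+r'+1, j) \<in> S"
          using Sd dr[OF a(1)] dr[OF r'] xta[OF a(1)] xta[OF r'] a b b0n[OF a(1)] b0n[OF r'] by auto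
        then have "d+r+1 \<le> d+r'+1" using P2 j2 by blast
        then show False using a by simp
      qed
    next
      fix r r' assume a: "r < length a0" "r' < r" "a0!r' = b0!r'" "a0!r \<le> a0!r'"
      have r': "r' < length a0" using a by simp
      show "b0!r \<le> b0!r'"
      proof (cases "r' < c")
        case True
        then show ?thesis using idx0[OF True] c1 a0n[OF r'] b0n[OF r'] a by simp
      next
        case False
        then have rc: "c \<le> r" "c \<le> r'" using a by auto
        have "\<beta>!(m + (r-c)) \<le> \<beta>!(m + (r'-c))"
          using mono[of "r'-c" "r-c"] a a0n[OF a(1)] a0n[OF r'] rc la0 by simp
        then show ?thesis using b0n[OF a(1)] b0n[OF r'] idx rc by simp
      qed
    qed
    define v where "v = replicate c 1 @ (M.vU @ M.vD) @ replicate d 1"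
    define w where "w = rev v"
    have appv: "app v \<alpha> = Some \<beta>"
    proof -
      have "app v \<alpha> = Option.bind (app (replicate c 1) \<alpha>) (app ((M.vU @ M.vD) @ replicate d 1))"
        unfolding v_def by (rule app_append)
      also have "\<dots> = app ((M.vU @ M.vD) @ replicate d 1) a0" using app1 by simp
      also have "\<dots> = Option.bind (app (M.vU @ M.vD) a0) (app (replicate d 1))" by (rule app_append)
      also have "\<dots> = app (replicate d 1) b0" using M.app_mid by simp
      also have "\<dots> = Some (replicate d 1 @ b0)" by (rule app_ones)
      also have "replicate d 1 @ b0 = \<beta>" using beq unfolding b0_def by simp
      finally show ?thesis .
    qed
    have act: "word_act w \<alpha> = Some \<beta>" unfolding word_act_app w_def using appv by simp
    have lenw: "length w = n" using app_sum[OF appv] ncard unfolding w_def by simp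
    have bnd: "\<And>x. x \<in> set (M.vU @ M.vD) \<Longrightarrow> 2 \<le> x \<and> x \<le> M.bm" by (rule M.set_v_bound)
    have bndU: "\<And>x. x \<in> set M.vU \<Longrightarrow> 2 \<le> x \<and> x \<le> M.bm" using bnd by simp
    have bndD: "\<And>x. x \<in> set M.vD \<Longrightarrow> 2 \<le> x \<and> x \<le> M.bm" using bnd by simp
    have pos_w: "\<forall>i\<in>set w. 1 \<le> i" unfolding w_def v_def using bnd by fastforce
    have rw: "w = (replicate d 1 @ rev M.vD) @ (rev M.vU @ replicate c 1)"
      unfolding w_def v_def by simp
    have rhw: "reverse_hookword w"
      unfolding rw
    proof (rule rhw_lemma)
      have "sorted (rev M.vD)" using M.vD_sorted by (simp add: sorted_wrt_rev)
      then show "sorted (replicate d 1 @ rev M.vD)"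
        by (auto simp: sorted_append dest: bndD)
    next
      have s1: "sorted_wrt (>) (rev M.vU)" using M.vU_sorted by (simp add: sorted_wrt_rev)
      have s2: "sorted_wrt (>) (replicate c (1::nat))" using c_le(2)
        by (cases c) auto
      show "sorted_wrt (>) (rev M.vU @ replicate c 1)"
        using s1 s2 by (auto simp: sorted_wrt_append dest: bndU)
    next
      show "rev M.vU @ replicate c 1 \<noteq> []" using M.vU_last by simp
    next
      have "hd (rev M.vU @ replicate c 1) = M.bm" using M.vU_last by (simp add: hd_rev)
      then show "\<forall>x\<in>set (replicate d 1 @ rev M.vD). x \<le> hd (rev M.vU @ replicate c 1)"
        using M.bm2 by (auto dest: bndD)
    qed
    have setv: "set w = supp S"
    proof -
      have sv: "set w = (if c = 1 \<or> 0 < d then {1} else {}) \<union> set (M.vU @ M.vD)"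
        unfolding w_def v_def using c_le by (auto simp: Un_commute)
      show ?thesis
      proof (intro set_eqI iffI)
        fix j assume "j \<in> set w"
        then consider "j = 1" "c = 1 \<or> 0 < d" | "j \<in> set (M.vU @ M.vD)" unfolding sv by (auto split: if_splits)
        then show "j \<in> supp S"
        proof cases
          case 1
          then have "1 \<le> m" unfolding d_def using c_le by auto
          then have "(m, 1) \<in> S" using col1 by simp
          then show ?thesis using 1 unfolding supp_eq_help by blast
        next
          case 2
          then obtain r where r: "r < length a0" "a0!r < j" "j \<le> b0!r" using M.set_v by auto
          then have "(d+r+1, j) \<in> S" using Sd dr xta b0n by fastforce
          then show ?thesis unfolding supp_eq_help by blast
        qed
      next
        fix j assume "j \<in> supp S"
        then obtain i where i: "(i,j) \<in> S" unfolding supp_eq_help by blast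
        have i1: "1 \<le> i" "i \<le> length \<beta>" "xt!(i-1) < j" "j \<le> \<beta>!(i-1)" using i Sd by auto
        show "j \<in> set w"
        proof (cases "j = 1")
          case True
          then have "xt!(i-1) = 0" using i1 by simp
          then have "i - 1 < m"
          proof (rule contrapos_pp)
            assume h: "\<not> i - 1 < m"
            then have "i - 1 - m < length \<alpha>" using i1 lb by arith
            then have "1 \<le> \<alpha>!(i-1-m)" by (rule posa)
            then show "xt!(i-1) \<noteq> 0" using xt2[of "i-1"] h by simp
          qed
          then have "c = 1 \<or> 0 < d" unfolding d_def using c01 by auto
          then show ?thesis using True sv by simp
        next
          case False
          then have j2: "2 \<le> j" using i1 by simp
          have "\<not> i - 1 < d"
          proof
            assume "i - 1 < d"
            then have "\<beta>!(i-1) = 1" using tk by (metis length_replicate nth_replicate nth_take)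
            then show False using i1 j2 by simp
          qed
          then obtain r where r: "i - 1 = d + r" by (metis le_add_diff_inverse not_less)
          have rl: "r < length a0" using r i1 lb la0 c_le unfolding d_def by simp
          have "a0!r < j"
          proof (cases "r < c")
            case True then show ?thesis using idx0[OF True] a0n[OF rl] j2 by simp
          next
            case False then show ?thesis using idx[of r] xt2[of "d+r"] a0n[OF rl] i1 r by simp
          qed
          moreover have "j \<le> b0!r" using b0n[OF rl] i1 r by simp
          ultimately have "j \<in> set (M.vU @ M.vD)" using M.set_v rl by blast
          then show ?thesis using sv by simp
        qed
      qed
    qed
    have "w \<in> CRHW n" unfolding CRHW_def using lenw pos_w rhw conn[OF setv] by simp
    then show ?thesis using act by blast
  next
    case False
    have eqab: "\<And>r. r < length a0 \<Longrightarrow> a0!r = b0!r" using False le0 by (metis le_neq_implies_less)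
    have c0: "c = 0"
    proof (rule ccontr)
      assume "c \<noteq> 0"
      then have "c = 1" using c_le by simp
      then have "0 < length a0" "a0!0 = 1" "b0!0 = \<beta>!(m-1)" "2 \<le> \<beta>!(m-1)"
        using la0 a0n b0n idx0[of 0] c1 by auto
      then show False using eqab[of 0] by simp
    qed
    then have "a0 = \<alpha>" "d = m" unfolding a0_def d_def by auto
    have "b0 = \<alpha>" using eqab lb0 \<open>a0 = \<alpha>\<close> by (metis nth_equalityI)
    then have beq2: "\<beta> = replicate m 1 @ \<alpha>" using beq \<open>d = m\<close> unfolding b0_def by simp
    then have nm: "n = m" using ncard by (simp add: sum_list_replicate)
    then have m1: "1 \<le> m" using n1 by simp
    define w where "w = replicate m (1::nat)"
    have act: "word_act w \<alpha> = Some \<beta>" unfolding word_act_app w_def using app_ones beq2 by simp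
    have rw: "w = replicate (m-1) 1 @ [1]" unfolding w_def using m1
      by (metis Suc_diff_1 less_le_trans zero_less_one replicate_Suc replicate_append_same)
    have rhw: "reverse_hookword w" unfolding rw by (rule rhw_lemma) auto
    have "set w = {1..1}" unfolding w_def using m1 by auto
    then have "connected_word w" unfolding connected_word_def by blast
    then have "w \<in> CRHW n" unfolding CRHW_def using rhw nm by (simp add: w_def)
    then show ?thesis using act by blast
  qed
qed

end
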